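(* (Young's inequality for an exponential density.) Let $1<p<2$, let $p'$ be defined by $\frac1p+\frac1{p'}=1$, and let $\varphi(x)=e^{-|x|}$ on $\mathbb R$. Set \[ A_p=\left(\frac{p'}{2}\right)^{2/p}\left[\frac{\Gamma\!\left(\frac{2p}{2-p}\right)}{\Gamma\!\left(\frac{2}{2-p}\right)\Gamma\!\left(\frac{p}{2-p}\right)}\right]^{\frac{2}{p}-1}. \] Then for every $f\in L^p(\mathbb R)$, \[ \|\varphi*f\|_{L^{p'}(\mathbb R)}\le A_p\,\|f\|_{L^p(\mathbb R)} . \]
   Context: Here $\varphi*f(x)=\int_{\mathbb R}\varphi(x-y)f(y)\,dy$ denotes convolution on $\mathbb R$. *)

theory Defs
  imports "HOL-Analysis.Analysis"
begin

definition Lp_norm :: "real \<Rightarrow> (real \<Rightarrow> real) \<Rightarrow> real" where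
  "Lp_norm q g = (LINT x|lborel. \<bar>g x\<bar> powr q) powr (1 / q)"

definition in_Lp :: "real \<Rightarrow> (real \<Rightarrow> real) \<Rightarrow> bool" where
  "in_Lp q g \<longleftrightarrow> g \<in> borel_measurable lborel \<and> integrable lborel (\<lambda>x. \<bar>g x\<bar> powr q)"

definition conv :: "(real \<Rightarrow> real) \<Rightarrow> (real \<Rightarrow> real) \<Rightarrow> real \<Rightarrow> real" where
  "conv \<phi> f x = (LINT y|lborel. \<phi> (x - y) * f y)"

definition conj_exp :: "real \<Rightarrow> real" where
  "conj_exp p = p / (p - 1)"

definition A_const :: "real \<Rightarrow> real" where
  "A_const p = (conj_exp p / 2) powr (2 / p) *
     (Gamma (2 * p / (2 - p)) / (Gamma (2 / (2 - p)) * Gamma (p / (2 - p)))) powr (2 / p - 1)"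

end

theory Submission
  imports Defs "HOL-Probability.Distributions"
begin


lemma phi_nn: "(\<integral>\<^sup>+t. ennreal (exp (-\<bar>t\<bar>)) \<partial>lborel) \<le> 2"
proof -
  let ?A = "\<lambda>t::real. ennreal (exp (-t)) * indicator {0..} t"
  have A1: "(\<integral>\<^sup>+t. ?A t \<partial>lborel) = 1"
    using nn_intergal_power_times_exp_Ici[of 0] by simp
  have A2: "(\<integral>\<^sup>+t. ?A (0 + (-1) * t) \<partial>lborel) = 1"
    using nn_integral_real_affine[of ?A "-1" 0] A1 by simp
  have "(\<integral>\<^sup>+t. ennreal (exp (-\<bar>t\<bar>)) \<partial>lborel) \<le> (\<integral>\<^sup>+t. ?A t + ?A (0 + (-1) * t) \<partial>lborel)"
    by (intro nn_integral_mono) (auto simp: indicator_def)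
  also have "\<dots> = (\<integral>\<^sup>+t. ?A t \<partial>lborel) + (\<integral>\<^sup>+t. ?A (0 + (-1) * t) \<partial>lborel)"
    by (intro nn_integral_add) auto
  also have "\<dots> = 2" using A1 A2 by simp
  finally show ?thesis .
qed

lemma phi_shift_nn: "(\<integral>\<^sup>+y. ennreal (exp (-\<bar>x - y\<bar>)) \<partial>lborel) \<le> 2"
proof -
  have "(\<integral>\<^sup>+t. ennreal (exp (-\<bar>t\<bar>)) \<partial>lborel) = (\<integral>\<^sup>+y. ennreal (exp (-\<bar>x + (-1) * y\<bar>)) \<partial>lborel)"
    using nn_integral_real_affine[of "\<lambda>t. ennreal (exp (-\<bar>t\<bar>))" "-1" x] by simp
  then show ?thesis using phi_nn by simp
qed

lemma phi_shift_int: fixes x :: real shows "integrable lborel (\<lambda>y. exp (-\<bar>x - y\<bar>))"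
  "(LINT y|lborel. exp (-\<bar>x - y\<bar>)) \<le> 2"
proof -
  show I: "integrable lborel (\<lambda>y. exp (-\<bar>x - y\<bar>))"
    using phi_shift_nn[of x] by (intro integrableI_nonneg) (auto simp: top.extremum_strict order.strict_trans1 ennreal_less_top)
  have "ennreal (LINT y|lborel. exp (-\<bar>x - y\<bar>)) = (\<integral>\<^sup>+y. ennreal (exp (-\<bar>x - y\<bar>)) \<partial>lborel)"
    by (rule nn_integral_eq_integral[symmetric]) (use I in auto)
  then show "(LINT y|lborel. exp (-\<bar>x - y\<bar>)) \<le> 2" using phi_shift_nn[of x]
    by (metis ennreal_le_iff ennreal_numeral zero_le_numeral)
qed



lemma holder_nonneg:
  fixes a b :: "real \<Rightarrow> real" and p q :: real
  assumes pq: "p > 1" "q > 1" "1/p + 1/q = 1"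
    and [measurable]: "a \<in> borel_measurable lborel" "b \<in> borel_measurable lborel"
    and a0: "\<And>x. a x \<ge> 0" and b0: "\<And>x. b x \<ge> 0"
    and ia: "integrable lborel (\<lambda>x. a x powr p)" and ib: "integrable lborel (\<lambda>x. b x powr q)"
  shows "integrable lborel (\<lambda>x. a x * b x)"
    "(LINT x|lborel. a x * b x) \<le> (LINT x|lborel. a x powr p) powr (1/p) * (LINT x|lborel. b x powr q) powr (1/q)"
proof -
  have young: "\<And>u v. u \<ge> 0 \<Longrightarrow> v \<ge> 0 \<Longrightarrow> u * v \<le> u powr p / p + v powr q / q"
    using Youngs_inequality pq by blast
  show iab: "integrable lborel (\<lambda>x. a x * b x)"
  proof (rule Bochner_Integration.integrable_bound)
    show "integrable lborel (\<lambda>x. a x powr p / p + b x powr q / q)" using ia ib by auto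
    show "AE x in lborel. norm (a x * b x) \<le> norm (a x powr p / p + b x powr q / q)"
      using young a0 b0 pq by (auto intro!: AE_I2 simp: abs_mult)
  qed auto
  define A where "A = (LINT x|lborel. a x powr p)"
  define B where "B = (LINT x|lborel. b x powr q)"
  have A0: "A \<ge> 0" unfolding A_def by (intro integral_nonneg_AE) auto
  have B0: "B \<ge> 0" unfolding B_def by (intro integral_nonneg_AE) auto
  show "(LINT x|lborel. a x * b x) \<le> A powr (1/p) * B powr (1/q)"
  proof (cases "A = 0 \<or> B = 0")
    case True
    have "AE x in lborel. a x * b x = 0"
    proof (cases "A = 0")
      case True
      then have "AE x in lborel. a x powr p = 0" unfolding A_def
        using integral_nonneg_eq_0_iff_AE[OF ia] by auto
      then show ?thesis by eventually_elim (use pq in auto)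
    next
      case False
      then have "B = 0" using \<open>A = 0 \<or> B = 0\<close> by auto
      then have "AE x in lborel. b x powr q = 0" unfolding B_def
        using integral_nonneg_eq_0_iff_AE[OF ib] by auto
      then show ?thesis by eventually_elim (use pq in auto)
    qed
    then have "(LINT x|lborel. a x * b x) = 0"
      by (rule integral_eq_zero_AE)
    then show ?thesis using A0 B0 by simp
  next
    case False
    then have Ap: "A > 0" and Bp: "B > 0" using A0 B0 by auto
    define \<alpha> where "\<alpha> = A powr (1/p)"
    define \<beta> where "\<beta> = B powr (1/q)"
    have ap: "\<alpha> > 0" "\<beta> > 0" using Ap Bp by (auto simp: \<alpha>_def \<beta>_def)
    have apow: "\<alpha> powr p = A" using Ap pq by (simp add: \<alpha>_def powr_powr)
    have bpow: "\<beta> powr q = B" using Bp pq by (simp add: \<beta>_def powr_powr)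
    have pt: "a x * b x / (\<alpha> * \<beta>) \<le> a x powr p / (p * A) + b x powr q / (q * B)" for x
    proof -
      have "a x * b x / (\<alpha> * \<beta>) = (a x / \<alpha>) * (b x / \<beta>)" by simp
      also have "\<dots> \<le> (a x / \<alpha>) powr p / p + (b x / \<beta>) powr q / q"
        by (intro young) (use a0 b0 ap in auto)
      also have "\<dots> = a x powr p / (p * A) + b x powr q / (q * B)"
        using a0 b0 ap apow bpow by (simp add: powr_divide mult.commute)
      finally show ?thesis .
    qed
    have "(LINT x|lborel. a x * b x / (\<alpha> * \<beta>)) \<le> (LINT x|lborel. a x powr p / (p * A) + b x powr q / (q * B))"
      using iab ia ib pt by (intro integral_mono) auto
    also have "\<dots> = A / (p * A) + B / (q * B)"
      using ia ib by (simp add: A_def B_def)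
    also have "\<dots> = 1" using Ap Bp pq by simp
    finally have "(LINT x|lborel. a x * b x) / (\<alpha> * \<beta>) \<le> 1" by simp
    then show ?thesis using ap by (simp add: \<alpha>_def \<beta>_def divide_le_eq)
  qed
qed



lemma Beta_le: fixes b :: real assumes "b > 1" shows "Beta b b \<le> (1/4) powr (b-1)"
proof -
  have "((\<lambda>t. t powr (b - 1) * (1 - t) powr (b - 1)) has_integral Beta b b) {0..1}"
    using has_integral_Beta_real[of b b] assms by simp
  moreover have "((\<lambda>t::real. (1/4::real) powr (b-1)) has_integral (1/4) powr (b-1)) {0..1}"
    using has_integral_const_real[of "(1/4::real) powr (b-1)" 0 1] by (simp add: cbox_interval)
  moreover have "t powr (b - 1) * (1 - t) powr (b - 1) \<le> (1/4) powr (b-1)" if "t \<in> {0..1}" for t :: real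
  proof -
    have "t powr (b - 1) * (1 - t) powr (b - 1) = (t * (1-t)) powr (b-1)"
      using that by (simp add: powr_mult)
    also have "\<dots> \<le> (1/4) powr (b-1)"
    proof (rule powr_mono2)
      have "0 \<le> (t - 1/2) * (t - 1/2)" by simp
      then show "t * (1 - t) \<le> 1/4" by (simp add: algebra_simps)
    qed (use that assms in auto)
    finally show ?thesis .
  qed
  ultimately show ?thesis by (rule has_integral_le) 
qed

lemma e_ge: "exp 1 \<ge> (27/10::real)"
proof -
  have "\<bar>exp(1) - 5837465777 / 2147483648\<bar> \<le> (inverse(2 ^ 32)::real)" by (rule e_approx_32)
  then have "-(inverse (2^32)) \<le> exp 1 - 5837465777 / (2147483648::real)" by (simp only: abs_le_iff) linarith
  then show ?thesis by simp
qed

lemma A_bound: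
  fixes p :: real assumes p: "1 < p" "p < 2"
  shows "4 powr (1 / conj_exp p) \<le> A_const p"
proof -
  define q where "q = conj_exp p"
  define b where "b = p / (2 - p)"
  have q: "q = p / (p - 1)" by (simp add: q_def conj_exp_def)
  have q2: "q > 2" using p by (simp add: q field_simps)
  have b1: "b > 1" using p by (simp add: b_def field_simps)
  have e3: "p/(2-p) = b" by (simp add: b_def)
  have e1: "2*p/(2-p) = b + b" using e3 by (metis mult_2 times_divide_eq_right)
  have e2: "2/(2-p) = b + 1" using p by (simp add: b_def field_simps)
  have e4: "2/p - 1 = 1/b" using p by (simp add: b_def field_simps)
  have e5: "(b-1)/b = 2/q" using p by (simp add: b_def q field_simps)
  have Gb: "Gamma b > 0" using b1 by simp
  have Gbb: "Gamma (b+b) > 0" using b1 by simp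
  have G1: "Gamma (b+1) = b * Gamma b"
  proof -
    have "b \<notin> \<int>\<^sub>\<le>\<^sub>0" using b1 by (auto elim!: nonpos_Ints_cases)
    then show ?thesis by (rule Gamma_plus1)
  qed
  define B where "B = Beta b b"
  have Bdef: "B = Gamma b * Gamma b / Gamma (b+b)" by (simp add: B_def Beta_def)
  have Bpos: "B > 0" using Gb Gbb by (simp add: Bdef)
  have R_eq: "Gamma (2*p/(2-p)) / (Gamma (2/(2-p)) * Gamma (p/(2-p))) = 1/(b * B)"
    unfolding e1 e2 e3 G1 Bdef using Gb Gbb b1 by (simp add: field_simps)
  have lnB: "ln B \<le> - ((b-1) * ln 4)"
  proof -
    have "ln B \<le> ln ((1/4) powr (b-1))" using Beta_le[OF b1] Bpos unfolding B_def[symmetric]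
      by (subst ln_le_cancel_iff) auto
    also have "\<dots> = (b-1) * ln (1/4)" by (simp add: ln_powr)
    also have "\<dots> = - ((b-1) * ln 4)" by (simp add: ln_div)
    finally show ?thesis .
  qed
  have lnR: "ln (1/(b*B)) \<ge> (b-1) * ln 4 - ln b"
    using lnB Bpos b1 by (simp add: ln_div ln_mult)
  have lnb: "ln b / b \<le> 4/9"
  proof -
    have "ln (b / exp 1) \<le> b / exp 1 - 1" by (rule ln_le_minus_one) (use b1 in simp)
    then have "ln b \<le> b / exp 1" using b1 by (simp add: ln_div)
    also have "\<dots> \<le> b * (4/9)" using e_ge b1 by (simp add: field_simps)
    finally show ?thesis using b1 by (simp add: field_simps)
  qed
  have ln2: "ln (4::real) \<ge> 4/3"
    using ln2_ge_two_thirds ln_mult[of 2 2] by simp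
  have key: "(2/p) * ln (q/2) + (1/b) * ((b-1) * ln 4 - ln b) \<ge> (1/q) * ln 4"
  proof -
    have "(1/b) * ((b-1) * ln 4 - ln b) = ((b-1)/b) * ln 4 - ln b / b"
      using b1 by (simp add: field_simps)
    then have "(1/b) * ((b-1) * ln 4 - ln b) = (2/q) * ln 4 - ln b / b" unfolding e5 .
    moreover have "(2/p) * ln (q/2) + (1/q) * ln 4 \<ge> 4/9"
    proof (cases "q \<le> 3")
      case True
      have "(1/q) * ln 4 \<ge> (1/3) * (4/3)"
        using True q2 ln2 by (intro mult_mono) (auto simp: field_simps)
      moreover have "(2/p) * ln (q/2) \<ge> 0" using p q2 by simp
      moreover have "(1/q) * ln 4 \<ge> 0" using q2 ln2 by simp
      ultimately show ?thesis by linarith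
    next
      case False
      have pq: "2/p = 2 - 2/q" using p by (simp add: q field_simps)
      have "ln (q/2) \<ge> 1/3"
      proof -
        have "ln (q/2) \<ge> ln (3/2)" using False by simp
        moreover have "ln (3/2::real) \<ge> 1 - 1/(3/2)"
          using ln_diff_le[of 1 "3/2"] by simp
        ultimately show ?thesis by simp
      qed
      moreover have "2/p \<ge> 4/3"
      proof -
        have "2/q \<le> 2/3" using False q2 by (intro divide_left_mono) auto
        then show ?thesis using pq by linarith
      qed
      ultimately have "(2/p) * ln (q/2) \<ge> (4/3) * (1/3)"
        by (intro mult_mono) (use p in auto)
      moreover have "(1/q) * ln 4 \<ge> 0" using q2 ln2 by simp
      ultimately show ?thesis by linarith
    qed
    ultimately show ?thesis using lnb by simp
  qed
  have Apos: "A_const p = exp ((2/p) * ln (q/2) + (1/b) * ln (1/(b*B)))"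
    unfolding A_const_def q_def[symmetric] R_eq e4 using q2 Bpos b1
    by (simp add: powr_def exp_add mult.commute)
  have "4 powr (1/q) = exp ((1/q) * ln 4)" by (simp add: powr_def)
  also have "\<dots> \<le> A_const p" unfolding Apos
  proof (rule exp_mono)
    have "(1/b) * ((b-1) * ln 4 - ln b) \<le> (1/b) * ln (1/(b*B))"
      using lnR b1 by (intro mult_left_mono) auto
    then show "(1/q) * ln 4 \<le> (2/p) * ln (q/2) + (1/b) * ln (1/(b*B))" using key by linarith
  qed
  finally show ?thesis by (simp add: q_def)
qed



lemma young_main:
  fixes p :: real and f :: "real \<Rightarrow> real"
  assumes p: "1 < p" "p < 2" and fL: "in_Lp p f"
  shows "in_Lp (conj_exp p) (conv (\<lambda>x. exp (- \<bar>x\<bar>)) f)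
     \<and> Lp_norm (conj_exp p) (conv (\<lambda>x. exp (- \<bar>x\<bar>)) f) \<le> 4 powr (1 / conj_exp p) * Lp_norm p f"
proof -
  define q where "q = conj_exp p"
  have q: "q = p / (p - 1)" by (simp add: q_def conj_exp_def)
  have q2: "q > 2" using p by (simp add: q field_simps)
  have pq1: "1/q + 1/p = 1" using p by (simp add: q field_simps)
  have fm[measurable]: "f \<in> borel_measurable lborel" and fi: "integrable lborel (\<lambda>x. \<bar>f x\<bar> powr p)"
    using fL by (auto simp: in_Lp_def)
  define g where "g = conv (\<lambda>x. exp (- \<bar>x\<bar>)) f"
  have g_eq: "g x = (LINT y|lborel. exp (- \<bar>x - y\<bar>) * f y)" for x
    by (simp add: g_def conv_def)
  define I where "I = (LINT y|lborel. \<bar>f y\<bar> powr p)"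
  define N where "N = Lp_norm p f"
  have N_eq: "N = I powr (1/p)" by (simp add: N_def I_def Lp_norm_def)
  have I0: "I \<ge> 0" unfolding I_def by (intro integral_nonneg_AE) auto
  have gm[measurable]: "g \<in> borel_measurable lborel"
  proof -
    have "(\<lambda>(x, y). exp (- \<bar>x - y\<bar>) * f y) \<in> borel_measurable (lborel \<Otimes>\<^sub>M lborel)"
      by measurable
    then show ?thesis unfolding g_eq[abs_def]
      by (rule lborel.borel_measurable_lebesgue_integral)
  qed
  show ?thesis
  proof (cases "I = 0")
    case True
    then have "AE y in lborel. \<bar>f y\<bar> powr p = 0" unfolding I_def
      using integral_nonneg_eq_0_iff_AE[OF fi] by auto
    then have f0: "AE y in lborel. f y = 0" by eventually_elim simp
    have "g x = 0" for x unfolding g_eq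
      by (rule integral_eq_zero_AE) (use f0 in auto)
    then have g0: "g = (\<lambda>x. 0)" by auto
    have "N = 0" using True N_eq by simp
    then show ?thesis unfolding g_def[symmetric] q_def[symmetric] g0
      by (simp add: in_Lp_def Lp_norm_def)
  next
    case False
    then have Ip: "I > 0" using I0 by simp
    have Np: "N > 0" using Ip N_eq by simp
    have NI: "N powr p = I" using Ip p by (simp add: N_eq powr_powr)
    define h where "h x = (LINT y|lborel. exp (- \<bar>x - y\<bar>) * \<bar>f y\<bar>)" for x
    define G where "G x = (LINT y|lborel. exp (- \<bar>x - y\<bar>) * \<bar>f y\<bar> powr p)" for x
    have phiq: "integrable lborel (\<lambda>y. exp (- \<bar>x - y\<bar>) powr q)"
      "(LINT y|lborel. exp (- \<bar>x - y\<bar>) powr q) \<le> 2" for x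
    proof -
      have le: "exp (- \<bar>x - y\<bar>) powr q \<le> exp (- \<bar>x - y\<bar>)" for y
      proof -
        have "exp (- \<bar>x - y\<bar>) powr q = exp (q * (- \<bar>x - y\<bar>))" by (simp add: powr_def)
        also have "\<dots> \<le> exp (- \<bar>x - y\<bar>)"
          using q2 by (intro exp_mono) (simp add: mult_le_cancel_right1 abs_ge_zero)
        finally show ?thesis .
      qed
      show I1: "integrable lborel (\<lambda>y. exp (- \<bar>x - y\<bar>) powr q)"
        by (rule Bochner_Integration.integrable_bound[OF phi_shift_int(1)[of x]])
           (use le in auto)
      have "(LINT y|lborel. exp (- \<bar>x - y\<bar>) powr q) \<le> (LINT y|lborel. exp (- \<bar>x - y\<bar>))"
        by (intro integral_mono I1 phi_shift_int(1) le)
      then show "(LINT y|lborel. exp (- \<bar>x - y\<bar>) powr q) \<le> 2" using phi_shift_int(2)[of x] by linarith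
    qed
    have Gi: "integrable lborel (\<lambda>y. exp (- \<bar>x - y\<bar>) * \<bar>f y\<bar> powr p)" for x
    proof (rule Bochner_Integration.integrable_bound[OF fi])
      show "AE y in lborel. norm (exp (- \<bar>x - y\<bar>) * \<bar>f y\<bar> powr p) \<le> norm (\<bar>f y\<bar> powr p)"
      proof (rule AE_I2)
        fix y
        have "exp (- \<bar>x - y\<bar>) \<le> 1" by simp
        then show "norm (exp (- \<bar>x - y\<bar>) * \<bar>f y\<bar> powr p) \<le> norm (\<bar>f y\<bar> powr p)"
          by (simp add: abs_mult mult_left_le_one_le)
      qed
    qed auto
    have H1: "integrable lborel (\<lambda>y. exp (- \<bar>x - y\<bar>) * \<bar>f y\<bar>)"
      "h x \<le> (LINT y|lborel. exp (- \<bar>x - y\<bar>) powr q) powr (1/q) * N" for x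
      using holder_nonneg[of q p "\<lambda>y. exp (- \<bar>x - y\<bar>)" "\<lambda>y. \<bar>f y\<bar>"] q2 p pq1 phiq fi
      by (auto simp: h_def N_eq I_def add.commute)
    have hsup: "h x \<le> 2 powr (1/q) * N" for x
    proof -
      have "(LINT y|lborel. exp (- \<bar>x - y\<bar>) powr q) powr (1/q) \<le> 2 powr (1/q)"
        using phiq(2)[of x] q2 by (intro powr_mono2) (auto intro!: integral_nonneg_AE)
      then show ?thesis using H1(2)[of x] Np by (meson mult_right_mono less_imp_le order_trans)
    qed
    have h0: "h x \<ge> 0" for x unfolding h_def by (intro integral_nonneg_AE) auto
    have G0: "G x \<ge> 0" for x unfolding G_def by (intro integral_nonneg_AE) auto
    have H2: "h x \<le> 2 powr (1/q) * G x powr (1/p)" for x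
    proof -
      let ?a = "\<lambda>y. exp (- \<bar>x - y\<bar>) powr (1/q)"
      let ?b = "\<lambda>y. exp (- \<bar>x - y\<bar>) powr (1/p) * \<bar>f y\<bar>"
      have ea: "?a y powr q = exp (- \<bar>x - y\<bar>)" for y using q2 by (simp add: powr_powr)
      have eb: "?b y powr p = exp (- \<bar>x - y\<bar>) * \<bar>f y\<bar> powr p" for y
        using p by (simp add: powr_mult powr_powr)
      have eab: "?a y * ?b y = exp (- \<bar>x - y\<bar>) * \<bar>f y\<bar>" for y
      proof -
        have "?a y * ?b y = (exp (- \<bar>x - y\<bar>) powr (1/q) * exp (- \<bar>x - y\<bar>) powr (1/p)) * \<bar>f y\<bar>"
          by (simp add: mult.assoc)
        also have "\<dots> = exp (- \<bar>x - y\<bar>) powr (1/q + 1/p) * \<bar>f y\<bar>" by (simp add: powr_add)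
        finally show ?thesis using pq1 by simp
      qed
      have "(LINT y|lborel. ?a y * ?b y) \<le> (LINT y|lborel. ?a y powr q) powr (1/q) * (LINT y|lborel. ?b y powr p) powr (1/p)"
        by (rule holder_nonneg(2)) (use q2 p pq1 phi_shift_int(1)[of x] Gi[of x] in \<open>auto simp: ea eb add.commute\<close>)
      then have "h x \<le> (LINT y|lborel. exp (- \<bar>x - y\<bar>)) powr (1/q) * G x powr (1/p)"
        by (simp only: eab ea eb h_def G_def)
      also have "\<dots> \<le> 2 powr (1/q) * G x powr (1/p)"
        using phi_shift_int(2)[of x] q2 by (intro mult_right_mono powr_mono2) (auto intro!: integral_nonneg_AE)
      finally show ?thesis .
    qed
    have hp: "h x powr p \<le> 2 powr (p/q) * G x" for x
    proof -
      have "h x powr p \<le> (2 powr (1/q) * G x powr (1/p)) powr p"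
        using H2[of x] h0[of x] p by (intro powr_mono2) auto
      also have "\<dots> = 2 powr (p/q) * G x"
        using p G0[of x] by (simp add: powr_mult powr_powr)
      finally show ?thesis .
    qed

    have kmeas: "(\<lambda>(x, y). exp (- \<bar>x - y\<bar>) * \<bar>f y\<bar> powr p) \<in> borel_measurable (lborel \<Otimes>\<^sub>M lborel)"
      by measurable
    have Gm[measurable]: "G \<in> borel_measurable lborel"
      unfolding G_def[abs_def] by (rule lborel.borel_measurable_lebesgue_integral[OF kmeas])
    have GN: "ennreal (G x) = (\<integral>\<^sup>+y. ennreal (exp (- \<bar>x - y\<bar>) * \<bar>f y\<bar> powr p) \<partial>lborel)" for x
      unfolding G_def by (rule nn_integral_eq_integral[symmetric]) (use Gi[of x] in auto)
    have fN: "ennreal I = (\<integral>\<^sup>+y. ennreal (\<bar>f y\<bar> powr p) \<partial>lborel)"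
      unfolding I_def by (rule nn_integral_eq_integral[symmetric]) (use fi in auto)
    have Gint_nn: "(\<integral>\<^sup>+x. ennreal (G x) \<partial>lborel) \<le> ennreal (2 * I)"
    proof -
      have "(\<integral>\<^sup>+x. ennreal (G x) \<partial>lborel)
          = (\<integral>\<^sup>+x. (\<integral>\<^sup>+y. ennreal (exp (- \<bar>x - y\<bar>) * \<bar>f y\<bar> powr p) \<partial>lborel) \<partial>lborel)"
        by (simp add: GN)
      also have "\<dots> = (\<integral>\<^sup>+y. (\<integral>\<^sup>+x. ennreal (exp (- \<bar>x - y\<bar>) * \<bar>f y\<bar> powr p) \<partial>lborel) \<partial>lborel)"
        by (rule lborel_pair.Fubini'[symmetric]) measurable
      also have "\<dots> \<le> (\<integral>\<^sup>+y. 2 * ennreal (\<bar>f y\<bar> powr p) \<partial>lborel)"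
      proof (rule nn_integral_mono)
        fix y
        have "(\<integral>\<^sup>+x. ennreal (exp (- \<bar>x - y\<bar>) * \<bar>f y\<bar> powr p) \<partial>lborel)
            = (\<integral>\<^sup>+x. ennreal (exp (- \<bar>y - x\<bar>)) * ennreal (\<bar>f y\<bar> powr p) \<partial>lborel)"
          by (intro nn_integral_cong) (simp add: abs_minus_commute ennreal_mult)
        also have "\<dots> = (\<integral>\<^sup>+x. ennreal (exp (- \<bar>y - x\<bar>)) \<partial>lborel) * ennreal (\<bar>f y\<bar> powr p)"
          by (rule nn_integral_multc) measurable
        also have "\<dots> \<le> 2 * ennreal (\<bar>f y\<bar> powr p)"
          by (intro mult_right_mono phi_shift_nn) auto
        finally show "(\<integral>\<^sup>+x. ennreal (exp (- \<bar>x - y\<bar>) * \<bar>f y\<bar> powr p) \<partial>lborel) \<le> 2 * ennreal (\<bar>f y\<bar> powr p)" .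
      qed
      also have "\<dots> = 2 * (\<integral>\<^sup>+y. ennreal (\<bar>f y\<bar> powr p) \<partial>lborel)"
        by (rule nn_integral_cmult) measurable
      also have "\<dots> = ennreal (2 * I)" using fN I0 by (simp add: ennreal_mult)
      finally show ?thesis .
    qed
    have Gint: "integrable lborel G"
      by (rule integrableI_nonneg) (use G0 Gint_nn in \<open>auto simp: ennreal_less_top order.strict_trans1\<close>)
    have GI: "(LINT x|lborel. G x) \<le> 2 * I"
    proof -
      have "ennreal (LINT x|lborel. G x) = (\<integral>\<^sup>+x. ennreal (G x) \<partial>lborel)"
        by (rule nn_integral_eq_integral[symmetric]) (use Gint G0 in auto)
      then have "ennreal (LINT x|lborel. G x) \<le> ennreal (2 * I)" using Gint_nn by simp
      then show ?thesis using I0 by (subst (asm) ennreal_le_iff) auto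
    qed
    have gh: "\<bar>g x\<bar> \<le> h x" for x
    proof -
      have "\<bar>g x\<bar> \<le> (LINT y|lborel. \<bar>exp (- \<bar>x - y\<bar>) * f y\<bar>)"
        unfolding g_eq by (rule integral_abs_bound)
      also have "\<dots> = h x" by (simp add: h_def abs_mult)
      finally show ?thesis .
    qed
    define C where "C = (2 powr (1/q) * N) powr (q - p) * 2 powr (p/q)"
    have C0: "C \<ge> 0" by (simp add: C_def)
    have gq: "\<bar>g x\<bar> powr q \<le> C * G x" for x
    proof -
      have "\<bar>g x\<bar> powr q \<le> h x powr q" using gh[of x] q2 by (intro powr_mono2) auto
      also have "\<dots> = h x powr (q - p) * h x powr p" by (simp add: powr_add[symmetric])
      also have "\<dots> \<le> (2 powr (1/q) * N) powr (q - p) * (2 powr (p/q) * G x)"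
        using hsup[of x] hp[of x] h0[of x] q2 p by (intro mult_mono powr_mono2) auto
      also have "\<dots> = C * G x" by (simp add: C_def)
      finally show ?thesis .
    qed
    have gqi: "integrable lborel (\<lambda>x. \<bar>g x\<bar> powr q)"
      by (rule Bochner_Integration.integrable_bound[of _ "\<lambda>x. C * G x"])
         (use Gint gq C0 G0 in \<open>auto intro!: AE_I2\<close>)
    have int_le: "(LINT x|lborel. \<bar>g x\<bar> powr q) \<le> C * (2 * I)"
    proof -
      have "(LINT x|lborel. \<bar>g x\<bar> powr q) \<le> (LINT x|lborel. C * G x)"
        by (intro integral_mono gqi gq) (use Gint in auto)
      also have "\<dots> = C * (LINT x|lborel. G x)" by simp
      also have "\<dots> \<le> C * (2 * I)" using GI C0 by (intro mult_left_mono)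
      finally show ?thesis .
    qed
    have C_eq: "C * (2 * I) = 4 * N powr q"
    proof -
      have "C = 2 powr ((q - p)/q) * N powr (q - p) * 2 powr (p/q)"
        using Np by (simp add: C_def powr_mult powr_powr)
      then have "C * (2 * I) = (2 powr ((q - p)/q) * 2 powr (p/q) * 2) * (N powr (q - p) * N powr p)"
        using NI by (simp add: algebra_simps)
      also have "2 powr ((q - p)/q) * 2 powr (p/q) * 2 = (4::real)"
      proof -
        have "2 powr ((q - p)/q) * 2 powr (p/q) = (2::real) powr ((q - p)/q + p/q)" by (simp add: powr_add)
        also have "(q - p)/q + p/q = 1" using q2 by (simp add: field_simps)
        finally show ?thesis by simp
      qed
      also have "N powr (q - p) * N powr p = N powr q" by (simp add: powr_add[symmetric])
      finally show ?thesis .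
    qed
    have "Lp_norm q g = (LINT x|lborel. \<bar>g x\<bar> powr q) powr (1/q)" by (simp add: Lp_norm_def)
    also have "\<dots> \<le> (4 * N powr q) powr (1/q)"
      using int_le C_eq q2 by (intro powr_mono2) (auto intro!: integral_nonneg_AE)
    also have "\<dots> = 4 powr (1/q) * N" using Np q2 by (simp add: powr_mult powr_powr)
    finally have "Lp_norm q g \<le> 4 powr (1/q) * N" .
    moreover have "in_Lp q g" using gm gqi by (simp add: in_Lp_def)
    ultimately show ?thesis by (simp add: g_def q_def N_def)
  qed
qed


theorem theorem3:
  fixes p :: real and f :: "real \<Rightarrow> real"
  assumes "1 < p" and "p < 2" and "in_Lp p f"
  shows "in_Lp (conj_exp p) (conv (\<lambda>x. exp (- \<bar>x\<bar>)) f)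
     \<and> Lp_norm (conj_exp p) (conv (\<lambda>x. exp (- \<bar>x\<bar>)) f) \<le> A_const p * Lp_norm p f"
proof -
  have N0: "Lp_norm p f \<ge> 0" by (simp add: Lp_norm_def)
  have "4 powr (1 / conj_exp p) * Lp_norm p f \<le> A_const p * Lp_norm p f"
    using A_bound[OF assms(1,2)] N0 by (rule mult_right_mono)
  then show ?thesis using young_main[OF assms] by linarith
qed

end
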